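(* In the polarized setting below, assume $w\ge2$ and keep the operators $D^0(t)$, $D^{\pm}_p(t)$ ($t\in H^0$) defined below. For $(z,\mathbf x,\mathbf y)\in\mathbf C\times\mathbf C^{w-1}\times\mathbf C^{w-1}$, $\mathbf x=(x_0,\dots,x_{w-2})$, $\mathbf y=(y_0,\dots,y_{w-2})$, define for $t\in H^0$ the endomorphism of $V_w$ $$D_{(z,\mathbf x,\mathbf y)}(t)=z\,D^0(t)+\sum_{p=0}^{w-2}x_p\,D^+_p(t)\pi_p+\sum_{p=0}^{w-2}y_p\,D^-_{p+1}(t)\pi_{p+1},$$ where $\pi_p:V_w\to H^p$ is the projection. If $x_py_p=z^2$ for all $p=0,\dots,w-2$, then $D_{(z,\mathbf x,\mathbf y)}(t)D_{(z,\mathbf x,\mathbf y)}(t')=D_{(z,\mathbf x,\mathbf y)}(t')D_{(z,\mathbf x,\mathbf y)}(t)$ for all $t,t'\in H^0$; i.e. the morphism $D_{(z,\mathbf x,\mathbf y)}:V_w\to(H^0)^*\otimes V_w$ satisfies $D_{(z,\mathbf x,\mathbf y)}\wedge D_{(z,\mathbf x,\mathbf y)}=0$ (it is a Higgs morphism). Thus the affine variety $\hat H=\{(z,\mathbf x,\mathbf y): x_py_p=z^2,\ p=0,\dots,w-2\}$ parametrizes such Higgs morphisms.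
   Context: Polarized setting. Let $X$ be a smooth complex projective variety of dimension $n\ge2$ with canonical divisor $K_X$, $\mathcal E$ a rank $n$ holomorphic vector bundle with $\mathcal O_X(L)=\det\mathcal E$ and $H^i(\mathcal O_X(-L))=0$ for $i\le n-1$. Let $e\in H^0(\mathcal E)$ be a section whose zero scheme $Z=Z_e$ is a finite set of $d$ distinct reduced points. Put $A=H^0(\mathcal O_Z)$ and $E_Z=\mathrm{Ext}^{n-1}(\mathcal I_Z(L),\mathcal O_X)$, viewed via Serre duality $E_Z\cong H^1(\mathcal I_Z(L+K_X))^*$ and dualizing the surjection $H^0(\mathcal O_Z(L+K_X))\to H^1(\mathcal I_Z(L+K_X))$ as a subspace of $H^0(\mathcal O_Z(L+K_X))^*\cong H^0(\omega_Z\otimes\mathcal O_X(-L-K_X))$, sections of an invertible sheaf on $Z$. An element $\alpha\in E_Z$ is regular if $f\mapsto f\alpha$ is an isomorphism $A\to H^0(\mathcal O_Z(L+K_X))^*$ (i.e. $\alpha$ vanishes at no point of $Z$). For regular $\alpha$ put $V_1=\{\beta/\alpha:\beta\in E_Z\}\subset A$ (it contains $1$), let $V_k$ be the span of all products of $k$ elements of $V_1$ (so $V_1\subset V_2\subset\cdots$), $V_0=0$, and let $w\ge1$ be the least integer with $V_k=V_w$ for all $k\ge w$. Let $q(f,g)=\sum_{z\in Z}f(z)g(z)$ be the trace form on $A$; $\alpha$ is polarizing if it is regular and $q|_{V_k}$ is non-degenerate for all $k\ge1$. For polarizing $\alpha$ define $H^p=V_p^{\perp}\cap V_{p+1}$ for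 $0\le p\le w-1$ and $H^w=V_w^{\perp}$, orthogonal complements taken in $A$ with respect to $q$. Then $A=\bigoplus_{p=0}^wH^p$, $H^0=V_1$ and $V_w=\bigoplus_{p=0}^{w-1}H^p$. For $t\in H^0$, multiplication by $t$ preserves $V_w$ and maps $H^p$ into $H^{p-1}\oplus H^p\oplus H^{p+1}$; $D^-_p(t):H^p\to H^{p-1}$, $D^0_p(t):H^p\to H^p$, $D^+_p(t):H^p\to H^{p+1}$ denote the components of multiplication by $t$ restricted to $H^p$, and $D^0(t)=\sum_{p=0}^{w-1}D^0_p(t)\pi_p$. *)

theory Defs
  imports Complex_Main "HOL-Library.Function_Algebras"
begin

text \<open>The finite set Z of d reduced points
is modelled by a finite type 'z; the algebra A = H^0(O_Z) is the algebra of functions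
'z => complex (pointwise operations). The subspace V_1 = {beta/alpha} is a parameter.\<close>

definition cscale :: "complex \<Rightarrow> ('z \<Rightarrow> complex) \<Rightarrow> ('z \<Rightarrow> complex)" where
  "cscale c f = (\<lambda>z. c * f z)"

definition cspan :: "('z \<Rightarrow> complex) set \<Rightarrow> ('z \<Rightarrow> complex) set" where
  "cspan S = module.span cscale S"

definition trq :: "('z::finite \<Rightarrow> complex) \<Rightarrow> ('z \<Rightarrow> complex) \<Rightarrow> complex" where
  "trq f g = (\<Sum>z\<in>UNIV. f z * g z)"

definition qperp :: "('z::finite \<Rightarrow> complex) set \<Rightarrow> ('z \<Rightarrow> complex) set" where
  "qperp S = {f. \<forall>g\<in>S. trq f g = 0}"

definition nondeg_on :: "('z::finite \<Rightarrow> complex) set \<Rightarrow> bool" where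
  "nondeg_on S \<longleftrightarrow> (\<forall>f\<in>S. (\<forall>g\<in>S. trq f g = 0) \<longrightarrow> f = 0)"

definition Vk :: "('z \<Rightarrow> complex) set \<Rightarrow> nat \<Rightarrow> ('z \<Rightarrow> complex) set" where
  "Vk V1 k = (if k = 0 then {0}
      else cspan {prod_list fs | fs. length fs = k \<and> set fs \<subseteq> V1})"

definition wdeg :: "('z \<Rightarrow> complex) set \<Rightarrow> nat" where
  "wdeg V1 = (LEAST w. 1 \<le> w \<and> (\<forall>k\<ge>w. Vk V1 k = Vk V1 w))"

definition polarizing :: "('z::finite \<Rightarrow> complex) set \<Rightarrow> bool" where
  "polarizing V1 \<longleftrightarrow> (\<forall>k\<ge>1. nondeg_on (Vk V1 k))"

definition Hp :: "('z::finite \<Rightarrow> complex) set \<Rightarrow> nat \<Rightarrow> ('z \<Rightarrow> complex) set" where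
  "Hp V1 p = (if p < wdeg V1 then qperp (Vk V1 p) \<inter> Vk V1 (Suc p)
              else qperp (Vk V1 (wdeg V1)))"

definition proj :: "('z::finite \<Rightarrow> complex) set \<Rightarrow> nat \<Rightarrow> ('z \<Rightarrow> complex) \<Rightarrow> ('z \<Rightarrow> complex)" where
  "proj V1 p f = (THE h. \<exists>g. (\<forall>r\<le>wdeg V1. g r \<in> Hp V1 r) \<and>
                        f = (\<Sum>r\<le>wdeg V1. g r) \<and> h = g p)"

definition D0 :: "('z::finite \<Rightarrow> complex) set \<Rightarrow> ('z \<Rightarrow> complex) \<Rightarrow> ('z \<Rightarrow> complex) \<Rightarrow> ('z \<Rightarrow> complex)" where
  "D0 V1 t f = (\<Sum>p<wdeg V1. proj V1 p (t * proj V1 p f))"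

definition Dplus :: "('z::finite \<Rightarrow> complex) set \<Rightarrow> nat \<Rightarrow> ('z \<Rightarrow> complex) \<Rightarrow> ('z \<Rightarrow> complex) \<Rightarrow> ('z \<Rightarrow> complex)" where
  "Dplus V1 p t f = proj V1 (Suc p) (t * proj V1 p f)"

definition Dminus :: "('z::finite \<Rightarrow> complex) set \<Rightarrow> nat \<Rightarrow> ('z \<Rightarrow> complex) \<Rightarrow> ('z \<Rightarrow> complex) \<Rightarrow> ('z \<Rightarrow> complex)" where
  "Dminus V1 p t f = proj V1 (p - 1) (t * proj V1 p f)"

definition Dzxy :: "('z::finite \<Rightarrow> complex) set \<Rightarrow> complex \<Rightarrow> (nat \<Rightarrow> complex) \<Rightarrow> (nat \<Rightarrow> complex)
    \<Rightarrow> ('z \<Rightarrow> complex) \<Rightarrow> ('z \<Rightarrow> complex) \<Rightarrow> ('z \<Rightarrow> complex)" where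
  "Dzxy V1 z x y t f =
     cscale z (D0 V1 t f)
     + (\<Sum>p<wdeg V1 - 1. cscale (x p) (Dplus V1 p t f))
     + (\<Sum>p<wdeg V1 - 1. cscale (y p) (Dminus V1 (Suc p) t f))"

end

theory Submission imports Defs begin

interpretation cs: vector_space cscale
  by unfold_locales (auto simp: cscale_def fun_eq_iff algebra_simps)

lemma sum_fapp: "(sum f A) x = (\<Sum>a\<in>A. f a x)"
  by (induction A rule: infinite_finite_induct) auto

definition ebas :: "('z::finite \<Rightarrow> complex) set" where
  "ebas = range (\<lambda>a z. if z = a then 1 else 0)"

lemma sum_ebas: "(\<Sum>a\<in>UNIV. cscale (f a) (\<lambda>z. if z = a then 1 else 0)) = (f::'z::finite \<Rightarrow> complex)"
  by (auto simp: fun_eq_iff cscale_def sum_fapp if_distrib cong: if_cong)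

lemma span_ebas: "cs.span (ebas::('z::finite \<Rightarrow> complex) set) = UNIV"
proof -
  { fix f :: "'z \<Rightarrow> complex"
    have "(\<Sum>a\<in>UNIV. cscale (f a) (\<lambda>z. if z = a then 1 else 0)) \<in> cs.span ebas"
      by (intro cs.span_sum cs.span_scale cs.span_base) (auto simp: ebas_def)
    hence "f \<in> cs.span ebas" by (simp add: sum_ebas) }
  thus ?thesis by auto
qed

lemma indep_ebas: "cs.independent (ebas::('z::finite \<Rightarrow> complex) set)"
proof -
  have "u v = 0" if H: "finite t" "t \<subseteq> ebas" "(\<Sum>v\<in>t. cscale (u v) v) = 0" "v \<in> t" for t u v
  proof -
    from that obtain a where a: "v = (\<lambda>z. if z = a then 1 else 0)" by (auto simp: ebas_def)
    have "(\<Sum>v\<in>t. cscale (u v) v) a = 0" using that(3) by simp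
    moreover have "(\<Sum>v\<in>t. cscale (u v) v) a = (\<Sum>v'\<in>t. if v' = v then u v else 0)"
      unfolding sum_fapp
    proof (rule sum.cong[OF refl])
      fix v' assume "v' \<in> t"
      then obtain b where b: "v' = (\<lambda>z. if z = b then 1 else 0)" using H \<open>v' \<in> t\<close> by (auto simp: ebas_def)
      show "cscale (u v') v' a = (if v' = v then u v else 0)"
        proof (cases "a = b")
        case True then have "v' = v" using a b by simp
        then show ?thesis using a by (simp add: cscale_def)
      next
        case False then have "v' \<noteq> v" using a b by (auto simp: fun_eq_iff)
        then show ?thesis using a b False by (simp add: cscale_def)
      qed
    qed
    ultimately show ?thesis using that by (simp add: sum.delta)
  qed
  thus ?thesis unfolding cs.independent_explicit_module by blast
qed

interpretation csf: finite_dimensional_vector_space cscale "ebas::('z::finite \<Rightarrow> complex) set"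
  proof
  show "finite (ebas::('z::finite \<Rightarrow> complex) set)" by (simp add: ebas_def)
qed (simp_all add: span_ebas indep_ebas)

interpretation csp: finite_dimensional_vector_space_pair_1 cscale "ebas::('z::finite \<Rightarrow> complex) set" cscale
  by unfold_locales

lemma trq_sym: "trq f g = trq g f"
  by (simp add: trq_def mult.commute)
lemma trq_add_left: "trq (f + g) h = trq f h + trq g h"
  by (simp add: trq_def algebra_simps sum.distrib)
lemma trq_add_right: "trq h (f + g) = trq h f + trq h g"
  by (simp add: trq_def algebra_simps sum.distrib)
lemma trq_diff_left: "trq (f - g) h = trq f h - trq g h"
  by (simp add: trq_def algebra_simps sum_subtractf)
lemma trq_diff_right: "trq h (f - g) = trq h f - trq h g"
  by (simp add: trq_def algebra_simps sum_subtractf)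
lemma trq_scale_left: "trq (cscale c f) h = c * trq f h"
  by (simp add: trq_def cscale_def sum_distrib_left algebra_simps)
lemma trq_scale_right: "trq h (cscale c f) = c * trq h f"
  by (simp add: trq_def cscale_def sum_distrib_left algebra_simps)
lemma trq_zero_left[simp]: "trq 0 h = 0" and trq_zero_right[simp]: "trq h 0 = 0"
  by (simp_all add: trq_def)
lemma trq_sum_left: "trq (sum F A) h = (\<Sum>a\<in>A. trq (F a) h)"
  by (simp add: trq_def sum_fapp sum_distrib_right sum.swap[of _ A])
lemma trq_sum_right: "trq h (sum F A) = (\<Sum>a\<in>A. trq h (F a))"
  by (simp add: trq_def sum_fapp sum_distrib_left sum.swap[of _ A])
lemma trq_mult: "trq (t * f) g = trq f (t * g)"
  by (simp add: trq_def algebra_simps)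

lemma trq_nondeg: assumes "\<And>g. trq f g = 0" shows "f = 0"
proof
  fix a
  have "trq f (\<lambda>z. if z = a then 1 else 0) = f a"
    by (simp add: trq_def if_distrib cong: if_cong)
  thus "f a = 0 a" using assms by simp
qed

lemma trq_span: assumes "\<And>b. b \<in> S \<Longrightarrow> trq f b = 0" "g \<in> cs.span S" shows "trq f g = 0"
  using assms(2)
proof (induction rule: cs.span_induct)
  case base
  show ?case unfolding cs.subspace_def by (auto simp: trq_add_right trq_scale_right)
next
  case (step x) thus ?case using assms(1) by simp
qed

lemma qperp_span: "qperp (cs.span S) = qperp S"
  unfolding qperp_def using trq_span cs.span_base by blast

lemma orth_decomp:
  fixes W :: "('z::finite \<Rightarrow> complex) set"
  assumes sub: "cs.subspace W" and nd: "nondeg_on W"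
  shows "\<exists>a\<in>W. f - a \<in> qperp W"
proof -
  obtain B where B: "finite B" "B \<subseteq> W" "cs.independent B" "cs.span B = W"
    using csf.basis_subspace_exists[OF sub] by metis
  define L where "L = (\<lambda>g. \<Sum>b\<in>B. cscale (trq g b) b)"
  have Ldiff: "L (g1 - g2) = L g1 - L g2" for g1 g2
    by (simp add: L_def trq_diff_left cs.scale_left_diff_distrib sum_subtractf)
  have Lin: "Vector_Spaces.linear cscale cscale L"
    unfolding Vector_Spaces.linear_iff
  proof (intro conjI allI)
    show "vector_space cscale" by (rule cs.vector_space_axioms)
    then show "vector_space cscale" .
    fix x y show "L (x + y) = L x + L y"
      by (simp add: L_def trq_add_left cs.scale_left_distrib sum.distrib)
  next
    fix c x show "L (cscale c x) = cscale c (L x)"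
      by (simp add: L_def trq_scale_left cs.scale_sum_right)
  qed
  have L0: "trq g b = 0" if "L g = 0" "b \<in> B" for g b
    using cs.independentD[OF B(3) B(1) order_refl, of "\<lambda>b. trq g b"] that by (simp add: L_def)
  have LW: "L g \<in> W" for g
  proof -
    have "L g \<in> cs.span B" unfolding L_def by (intro cs.span_sum cs.span_scale cs.span_base)
    thus ?thesis using B(4) by simp
  qed
  have inj: "inj_on L (cs.span W)"
  proof
    fix g1 g2 assume g: "g1 \<in> cs.span W" "g2 \<in> cs.span W" "L g1 = L g2"
    have "cs.span W = W" using sub by (rule cs.span_subspace[OF order_refl cs.span_superset])
    hence gW: "g1 - g2 \<in> W" using g sub cs.subspace_diff by metis
    have "L (g1 - g2) = 0" using g Ldiff by simp
    hence "trq (g1 - g2) h = 0" if "h \<in> W" for h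
      using trq_span[of B "g1 - g2" h] L0 that B(4) by blast
    hence "g1 - g2 = 0" using nd gW unfolding nondeg_on_def by blast
    thus "g1 = g2" by simp
  qed
  have "cs.dim (L ` W) = cs.dim W" using csp.dim_image_eq[OF Lin inj] .
  moreover have "cs.subspace (L ` W)"
    by (rule module_hom.subspace_image[OF _ sub]) (use Lin in \<open>simp add: module_hom_iff_linear\<close>)
  moreover have "L ` W \<subseteq> W" using LW by auto
  ultimately have "L ` W = W" using csf.subspace_dim_equal[of "L ` W" W] sub by simp
  then obtain a where a: "a \<in> W" "L a = L f" using LW[of f] by (metis imageE)
  have "L (f - a) = 0" using a Ldiff by simp
  hence "trq (f - a) h = 0" if "h \<in> W" for h
    using trq_span[of B "f - a" h] L0 that B(4) by blast
  thus ?thesis using a unfolding qperp_def by blast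
qed



definition Sk :: "('z \<Rightarrow> complex) set \<Rightarrow> nat \<Rightarrow> ('z \<Rightarrow> complex) set" where
  "Sk V1 k = {prod_list fs | fs. length fs = k \<and> set fs \<subseteq> V1}"

lemma Vk_Suc: "Vk V1 (Suc k) = cs.span (Sk V1 (Suc k))"
  by (simp add: Vk_def Sk_def cspan_def)

lemma Vk_subspace: "cs.subspace (Vk V1 k)"
  by (cases k) (simp_all add: Vk_def cspan_def)

lemma span_Vk[simp]: "cs.span (Vk V1 k) = Vk V1 k"
  using Vk_subspace cs.span_eq_iff by blast

lemma cscale_mult: "t * cscale c g = cscale c (t * g)"
  by (simp add: cscale_def fun_eq_iff)

lemma mult_Vk: assumes t: "t \<in> V1" and g: "g \<in> Vk V1 k" shows "t * g \<in> Vk V1 (Suc k)"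
proof (cases k)
  case 0 thus ?thesis using g by (simp add: Vk_def cs.span_zero cspan_def)
next
  case (Suc m)
  have "g \<in> cs.span (Sk V1 k)" using g Suc Vk_Suc[of V1 m] by simp
  thus ?thesis
  proof (induction rule: cs.span_induct)
    case base
    show ?case unfolding cs.subspace_def
      by (auto simp: distrib_left cscale_mult Vk_subspace cs.subspace_add cs.subspace_scale cs.subspace_0[OF Vk_subspace])
  next
    case (step h)
    then obtain fs where "h = prod_list fs" "length fs = k" "set fs \<subseteq> V1" by (auto simp: Sk_def)
    hence "t * h \<in> Sk V1 (Suc k)" using t unfolding Sk_def by (auto intro!: exI[of _ "t # fs"])
    thus ?case unfolding Vk_Suc by (rule cs.span_base)
  qed
qed

lemma Vk_1: assumes "cs.subspace V1" shows "Vk V1 1 = V1"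
proof -
  have "Sk V1 1 = V1"
  proof
    show "Sk V1 1 \<subseteq> V1" by (auto simp: Sk_def length_Suc_conv)
    show "V1 \<subseteq> Sk V1 1" unfolding Sk_def by (force intro: exI[of _ "[f]" for f])
  qed
  thus ?thesis using Vk_Suc[of V1 0] assms cs.span_eq_iff by simp
qed

lemma Vk_mono1: assumes "1 \<in> V1" shows "Vk V1 k \<subseteq> Vk V1 (Suc k)"
  using mult_Vk[OF assms] by fastforce

lemma Vk_mono: assumes "1 \<in> V1" "k \<le> m" shows "Vk V1 k \<subseteq> Vk V1 m"
  using assms(2)
proof (induction m)
  case 0 thus ?case by simp
next
  case (Suc m) thus ?case using Vk_mono1[OF assms(1), of m] by (cases "k = Suc m") auto
qed

lemma Vk_stab_step: assumes "Vk V1 k = Vk V1 (Suc k)" "1 \<in> V1" shows "Vk V1 (Suc k) = Vk V1 (Suc (Suc k))"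
proof -
  have "Sk V1 (Suc (Suc k)) \<subseteq> Vk V1 (Suc k)"
  proof
    fix h assume "h \<in> Sk V1 (Suc (Suc k))"
    then obtain fs where fs: "h = prod_list fs" "length fs = Suc (Suc k)" "set fs \<subseteq> V1" by (auto simp: Sk_def)
    then obtain f gs where fg: "fs = f # gs" by (cases fs) auto
    have "prod_list gs \<in> Sk V1 (Suc k)" using fs fg unfolding Sk_def by auto
    hence "prod_list gs \<in> Vk V1 k" using assms Vk_Suc cs.span_base by metis
    hence "f * prod_list gs \<in> Vk V1 (Suc k)" using fs fg by (intro mult_Vk) auto
    thus "h \<in> Vk V1 (Suc k)" using fs fg by simp
  qed
  hence "Vk V1 (Suc (Suc k)) \<subseteq> Vk V1 (Suc k)"
    unfolding Vk_Suc[of V1 "Suc k"] using cs.span_mono[of _ "Vk V1 (Suc k)"] span_Vk by (metis Vk_Suc)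
  moreover have "Vk V1 (Suc k) \<subseteq> Vk V1 (Suc (Suc k))" by (rule Vk_mono1[OF assms(2)])
  ultimately show ?thesis by blast
qed


lemma Vk_stab_exists: fixes V1 :: "('z::finite \<Rightarrow> complex) set" assumes "1 \<in> V1" shows "\<exists>k. Vk V1 k = Vk V1 (Suc k)"
proof (rule ccontr)
  assume "\<not> ?thesis"
  hence ne: "Vk V1 k \<noteq> Vk V1 (Suc k)" for k by blast
  have kd: "k \<le> cs.dim (Vk V1 k)" for k
  proof (induction k)
    case (Suc k)
    have "cs.span (Vk V1 k) \<subset> cs.span (Vk V1 (Suc k))" using ne[of k] Vk_mono1[OF assms, of k] by auto
    hence "cs.dim (Vk V1 k) < cs.dim (Vk V1 (Suc k))" by (rule csf.dim_psubset)
    thus ?case using Suc by simp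
  qed simp
  define N where "N = cs.dim (UNIV :: ('z \<Rightarrow> complex) set)"
  from kd[of "Suc N"] csf.dim_subset[of "Vk V1 (Suc N)" UNIV, OF subset_UNIV]
  show False unfolding N_def by linarith
qed

lemma Vk_stable_from: assumes "1 \<in> V1" "Vk V1 k = Vk V1 (Suc k)" "k \<le> j" shows "Vk V1 j = Vk V1 k"
proof -
  have "Vk V1 (k + i) = Vk V1 k \<and> Vk V1 (Suc (k + i)) = Vk V1 k" for i
  proof (induction i)
    case 0 thus ?case using assms by simp
  next
    case (Suc i)
    hence "Vk V1 (Suc (k + i)) = Vk V1 (Suc (Suc (k + i)))"
      using Vk_stab_step[OF _ assms(1), of "k + i"] by simp
    thus ?case using Suc by simp
  qed
  from this[of "j - k"] show ?thesis using assms(3) by simp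
qed

lemma wdeg_props: fixes V1 :: "('z::finite \<Rightarrow> complex) set" assumes "1 \<in> V1"
  shows "1 \<le> wdeg V1" "\<And>k. wdeg V1 \<le> k \<Longrightarrow> Vk V1 k = Vk V1 (wdeg V1)"
proof -
  obtain k where k: "Vk V1 k = Vk V1 (Suc k)" using Vk_stab_exists[OF assms] by blast
  have ex: "\<exists>w. 1 \<le> w \<and> (\<forall>j\<ge>w. Vk V1 j = Vk V1 w)"
  proof (rule exI[of _ "Suc k"], intro conjI allI impI)
    fix j assume "Suc k \<le> j"
    thus "Vk V1 j = Vk V1 (Suc k)" using Vk_stable_from[OF assms k, of j] k by simp
  qed simp
  from LeastI_ex[OF ex] show "1 \<le> wdeg V1" "\<And>k. wdeg V1 \<le> k \<Longrightarrow> Vk V1 k = Vk V1 (wdeg V1)"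
    unfolding wdeg_def by blast+
qed


lemma qperp_subspace: "cs.subspace (qperp S)"
  unfolding cs.subspace_def qperp_def by (auto simp: trq_add_left trq_scale_left)

definition cc :: "complex \<Rightarrow> (nat \<Rightarrow> complex) \<Rightarrow> (nat \<Rightarrow> complex) \<Rightarrow> nat \<Rightarrow> nat \<Rightarrow> complex" where
  "cc z x y q p = (if q = p then z else if q = Suc p then x p else if p = Suc q then y q else 0)"

definition ee :: "complex \<Rightarrow> (nat \<Rightarrow> complex) \<Rightarrow> (nat \<Rightarrow> complex) \<Rightarrow> nat \<Rightarrow> nat \<Rightarrow> complex" where
  "ee z x y q p = (if q = p then z^2 else if q = Suc p then z * x p else if p = Suc q then z * y q
     else if q = Suc (Suc p) then x (Suc p) * x p else if p = Suc (Suc q) then y q * y (Suc q) else 0)"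

locale polset =
  fixes V1 :: "('z::finite \<Rightarrow> complex) set"
  assumes sub: "cs.subspace V1" and one: "1 \<in> V1" and pol: "polarizing V1"
begin

abbreviation "w \<equiv> wdeg V1"
abbreviation "V k \<equiv> Vk V1 k"
abbreviation "H p \<equiv> Hp V1 p"
abbreviation "pr p f \<equiv> proj V1 p f"

lemma w_ge1: "1 \<le> w" by (rule wdeg_props(1)[OF one])
lemma V_stab: "w \<le> k \<Longrightarrow> V k = V w" by (rule wdeg_props(2)[OF one])
lemma V_mono: "k \<le> m \<Longrightarrow> V k \<subseteq> V m" by (rule Vk_mono[OF one])

lemma nd_V: "nondeg_on (V k)"
proof (cases k)
  case 0 thus ?thesis by (simp add: Vk_def nondeg_on_def)
next
  case (Suc m) thus ?thesis using pol by (simp add: polarizing_def)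
qed

lemma H_lt: "p < w \<Longrightarrow> H p = qperp (V p) \<inter> V (Suc p)" by (simp add: Hp_def)
lemma H_w: "H w = qperp (V w)" by (simp add: Hp_def)
lemma H_perp: "p \<le> w \<Longrightarrow> H p \<subseteq> qperp (V p)"
  by (cases "p < w") (auto simp: Hp_def)
lemma H_in_V: "p < w \<Longrightarrow> H p \<subseteq> V (Suc p)" by (auto simp: Hp_def)
lemma H_in_Vw: "p < w \<Longrightarrow> H p \<subseteq> V w" using H_in_V V_mono[of "Suc p" w] by auto
lemma H_subspace: "cs.subspace (H p)"
  by (auto simp: Hp_def intro!: cs.subspace_inter qperp_subspace Vk_subspace)
lemma H_0: "0 \<in> H p" using H_subspace cs.subspace_0 by blast

lemma split_V: assumes "p < w" "f \<in> V (Suc p)" shows "\<exists>a\<in>V p. f - a \<in> H p"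
proof -
  obtain a where a: "a \<in> V p" "f - a \<in> qperp (V p)" using orth_decomp[OF Vk_subspace nd_V] by blast
  have "a \<in> V (Suc p)" using a V_mono[of p "Suc p"] by auto
  hence "f - a \<in> V (Suc p)" using assms Vk_subspace cs.subspace_diff by blast
  thus ?thesis using a assms by (auto simp: H_lt)
qed

lemma split_A: "\<exists>a\<in>V w. f - a \<in> H w"
  using orth_decomp[OF Vk_subspace nd_V, of w f] unfolding H_w .

lemma decomp_V: "k \<le> w \<Longrightarrow> f \<in> V k \<Longrightarrow> \<exists>g. (\<forall>r. g r \<in> H r) \<and> f = (\<Sum>r<k. g r)"
proof (induction k arbitrary: f)
  case 0
  hence "f = 0" by (simp add: Vk_def)
  hence f0: "\<forall>r. f \<in> H r" using H_0 by simp
  show ?case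
  proof (rule exI[of _ "\<lambda>_. f"])
    show "(\<forall>r. (\<lambda>_. f) r \<in> H r) \<and> f = sum (\<lambda>_. f) {..<0}" using f0 \<open>f = 0\<close> by simp
  qed
next
  case (Suc k)
  have "k < w" using Suc.prems by simp
  then obtain a where a: "a \<in> V k" "f - a \<in> H k" using split_V Suc.prems(2) by blast
  obtain g where g: "\<forall>r. g r \<in> H r" "a = (\<Sum>r<k. g r)" using Suc.IH[OF _ a(1)] Suc.prems by auto
  show ?case
  proof (intro exI[of _ "g(k := f - a)"] conjI)
    show "\<forall>r. (g(k := f - a)) r \<in> H r" using g a by auto
    have "(\<Sum>r<Suc k. (g(k := f - a)) r) = (\<Sum>r<k. (g(k := f - a)) r) + (f - a)"
      by simp
    also have "(\<Sum>r<k. (g(k := f - a)) r) = (\<Sum>r<k. g r)" by (rule sum.cong) auto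
    finally have "(\<Sum>r<Suc k. (g(k := f - a)) r) = (\<Sum>r<k. g r) + (f - a)" .
    thus "f = (\<Sum>r<Suc k. (g(k := f - a)) r)" using g by simp
  qed
qed

lemma decomp: "\<exists>g. (\<forall>r. g r \<in> H r) \<and> f = (\<Sum>r\<le>w. g r)"
proof -
  obtain a where a: "a \<in> V w" "f - a \<in> H w" using split_A by blast
  obtain g where g: "\<forall>r. g r \<in> H r" "a = (\<Sum>r<w. g r)" using decomp_V[OF order_refl a(1)] by auto
  show ?thesis
  proof (intro exI[of _ "g(w := f - a)"] conjI)
    show "\<forall>r. (g(w := f - a)) r \<in> H r" using g a by auto
    have "{..w} = insert w {..<w}" by auto
    hence "(\<Sum>r\<le>w. (g(w := f - a)) r) = (\<Sum>r<w. (g(w := f - a)) r) + (f - a)"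
      by (simp add: add.commute)
    also have "(\<Sum>r<w. (g(w := f - a)) r) = (\<Sum>r<w. g r)" by (rule sum.cong) auto
    finally have "(\<Sum>r\<le>w. (g(w := f - a)) r) = (\<Sum>r<w. g r) + (f - a)" .
    thus "f = (\<Sum>r\<le>w. (g(w := f - a)) r)" using g by simp
  qed
qed

lemma H_orth_lt: assumes "r < s" "s \<le> w" "a \<in> H r" "b \<in> H s" shows "trq a b = 0"
proof -
  have "r < w" using assms by simp
  hence "a \<in> V (Suc r)" using assms(3) H_in_V by blast
  hence "a \<in> V s" using V_mono[of "Suc r" s] assms by auto
  moreover have "b \<in> qperp (V s)" using assms H_perp by blast
  ultimately show ?thesis by (simp add: qperp_def trq_sym)
qed

lemma H_orth: assumes "r \<noteq> s" "r \<le> w" "s \<le> w" "a \<in> H r" "b \<in> H s" shows "trq a b = 0"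
proof (cases "r < s")
  case True thus ?thesis using assms H_orth_lt[of r s a b] by blast
next
  case False
  hence "s < r" using assms(1) by simp
  hence "trq b a = 0" using assms H_orth_lt[of s r b a] by blast
  thus ?thesis using trq_sym[of a b] by simp
qed

lemma H_nondeg: assumes "s \<le> w" "a \<in> H s" "\<And>b. b \<in> H s \<Longrightarrow> trq a b = 0" shows "a = 0"
proof (cases "s < w")
  case True
  have aV: "a \<in> V (Suc s)" "a \<in> qperp (V s)" using assms True H_lt by auto
  have "trq a g = 0" if gV: "g \<in> V (Suc s)" for g
  proof -
    obtain c where c: "c \<in> V s" "g - c \<in> H s" using split_V[OF True gV] by blast
    have "trq a g = trq a c + trq a (g - c)" by (simp add: trq_diff_right)
    thus ?thesis using c aV assms(3) by (simp add: qperp_def)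
  qed
  thus ?thesis using nd_V[of "Suc s"] aV unfolding nondeg_on_def by blast
next
  case False
  hence s: "s = w" using assms by simp
  have aV: "a \<in> qperp (V w)" using assms s H_w by auto
  have "trq a g = 0" for g
  proof -
    obtain c where c: "c \<in> V w" "g - c \<in> H w" using split_A by blast
    have "trq a g = trq a c + trq a (g - c)" by (simp add: trq_diff_right)
    thus ?thesis using c aV assms(3) s by (simp add: qperp_def)
  qed
  thus ?thesis by (rule trq_nondeg)
qed

lemma trq_sum_H: assumes "\<forall>r\<le>w. g r \<in> H r" "s \<le> w" "b \<in> H s"
  shows "trq (\<Sum>r\<le>w. g r) b = trq (g s) b"
proof -
  have "trq (\<Sum>r\<le>w. g r) b = (\<Sum>r\<le>w. trq (g r) b)" by (rule trq_sum_left)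
  also have "\<dots> = (\<Sum>r\<le>w. if r = s then trq (g s) b else 0)"
  proof (rule sum.cong[OF refl])
    fix r assume r: "r \<in> {..w}"
    show "trq (g r) b = (if r = s then trq (g s) b else 0)"
    proof (cases "r = s")
      case False thus ?thesis using H_orth[of r s "g r" b] r assms by simp
    qed simp
  qed
  also have "\<dots> = trq (g s) b" using assms by simp
  finally show ?thesis .
qed

lemma decomp_unique: assumes "\<forall>r\<le>w. g r \<in> H r" "\<forall>r\<le>w. g' r \<in> H r"
  "(\<Sum>r\<le>w. g r) = (\<Sum>r\<le>w. g' r)" "s \<le> w" shows "g s = g' s"
proof -
  define d where "d r = g r - g' r" for r
  have d: "\<forall>r\<le>w. d r \<in> H r" using assms H_subspace cs.subspace_diff unfolding d_def by blast
  have ds: "(\<Sum>r\<le>w. d r) = 0" using assms(3) by (simp add: d_def sum_subtractf)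
  have "d s = 0"
  proof (rule H_nondeg[OF assms(4)])
    show "d s \<in> H s" using d assms by auto
    fix b assume "b \<in> H s"
    thus "trq (d s) b = 0" using trq_sum_H[OF d assms(4)] ds by simp
  qed
  thus ?thesis by (simp add: d_def)
qed

lemma proj_eq: assumes "\<forall>r\<le>w. g r \<in> H r" "f = (\<Sum>r\<le>w. g r)" "p \<le> w"
  shows "pr p f = g p"
  unfolding proj_def
proof (rule the_equality)
  show "\<exists>g'. (\<forall>r\<le>w. g' r \<in> H r) \<and> f = (\<Sum>r\<le>w. g' r) \<and> g p = g' p"
    using assms by blast
next
  fix h assume "\<exists>g'. (\<forall>r\<le>w. g' r \<in> H r) \<and> f = (\<Sum>r\<le>w. g' r) \<and> h = g' p"
  then obtain g' where "\<forall>r\<le>w. g' r \<in> H r" "f = (\<Sum>r\<le>w. g' r)" "h = g' p" by blast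
  thus "h = g p" using decomp_unique[OF assms(1), of g' p] assms by simp
qed

lemma proj_in: assumes "p \<le> w" shows "pr p f \<in> H p"
proof -
  obtain g where g: "\<forall>r. g r \<in> H r" "f = (\<Sum>r\<le>w. g r)" using decomp by blast
  have "pr p f = g p" using proj_eq[of g f p] g assms by blast
  thus ?thesis using g by simp
qed

lemma proj_sum: "f = (\<Sum>r\<le>w. pr r f)"
proof -
  obtain g where g: "\<forall>r. g r \<in> H r" "f = (\<Sum>r\<le>w. g r)" using decomp by blast
  have "(\<Sum>r\<le>w. pr r f) = (\<Sum>r\<le>w. g r)" by (rule sum.cong) (use proj_eq g in auto)
  thus ?thesis using g by simp
qed

lemma proj_add: assumes "p \<le> w" shows "pr p (f1 + f2) = pr p f1 + pr p f2"
proof (rule proj_eq[where g = "\<lambda>r. pr r f1 + pr r f2", OF _ _ assms])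
  show "\<forall>r\<le>w. pr r f1 + pr r f2 \<in> H r" using cs.subspace_add[OF H_subspace] proj_in by blast
  show "f1 + f2 = (\<Sum>r\<le>w. pr r f1 + pr r f2)" by (simp add: sum.distrib proj_sum[symmetric])
qed

lemma proj_scale: assumes "p \<le> w" shows "pr p (cscale c f) = cscale c (pr p f)"
proof (rule proj_eq[where g = "\<lambda>r. cscale c (pr r f)", OF _ _ assms])
  show "\<forall>r\<le>w. cscale c (pr r f) \<in> H r" using cs.subspace_scale[OF H_subspace] proj_in by blast
  show "cscale c f = (\<Sum>r\<le>w. cscale c (pr r f))" by (simp add: cs.scale_sum_right[symmetric] proj_sum[symmetric])
qed

lemma proj_zero: "p \<le> w \<Longrightarrow> pr p 0 = 0"
  using proj_scale[of p 0 0] by simp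

lemma proj_setsum: "p \<le> w \<Longrightarrow> pr p (\<Sum>a\<in>A. F a) = (\<Sum>a\<in>A. pr p (F a))"
  by (induction A rule: infinite_finite_induct) (auto simp: proj_zero proj_add)

lemma proj_H: assumes "q \<le> w" "p \<le> w" "h \<in> H q" shows "pr p h = (if p = q then h else 0)"
proof -
  have "pr p h = (if p = q then h else 0)"
    by (rule proj_eq[where g = "\<lambda>r. if r = q then h else 0"]) (use assms H_0 in auto)
  thus ?thesis .
qed

lemma trq_proj: assumes "p \<le> w" "h \<in> H p" shows "trq f h = trq (pr p f) h"
  using trq_sum_H[of "\<lambda>r. pr r f" p h] proj_sum[of f] proj_in assms by simp

lemma proj_low: assumes "f \<in> V k" "k \<le> p" "p \<le> w" shows "pr p f = 0"
proof (rule H_nondeg[OF assms(3) proj_in[OF assms(3)]])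
  fix h assume h: "h \<in> H p"
  have "f \<in> V p" using assms V_mono by blast
  moreover have "h \<in> qperp (V p)" using h H_perp assms by blast
  ultimately have "trq h f = 0" by (simp add: qperp_def)
  thus "trq (pr p f) h = 0" using trq_proj[OF assms(3) h, of f] trq_sym[of h f] by simp
qed

lemma proj_perp: assumes "f \<in> qperp (V j)" "p < j" "p < w" shows "pr p f = 0"
proof (rule H_nondeg[OF _ proj_in])
  fix h assume h: "h \<in> H p"
  have "h \<in> V j" using h H_in_V[OF assms(3)] V_mono[of "Suc p" j] assms by auto
  hence "trq f h = 0" using assms by (simp add: qperp_def)
  thus "trq (pr p f) h = 0" using trq_proj[of p h f] h assms by simp
qed (use assms in auto)


lemma H0_eq: "H 0 = V1"
proof -
  have "0 < w" using w_ge1 by simp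
  hence "H 0 = qperp (V 0) \<inter> V 1" using H_lt[of 0] by simp
  also have "qperp (V 0) = UNIV" by (simp add: Vk_def qperp_def)
  finally show ?thesis using Vk_1[OF sub] by simp
qed

lemma mult_Vw: "t \<in> V1 \<Longrightarrow> g \<in> V w \<Longrightarrow> t * g \<in> V w"
  using mult_Vk[of t V1 g w] V_stab[of "Suc w"] by simp

lemma band_up: assumes t: "t \<in> V1" and r: "r < w" and g: "g \<in> H r"
  and q: "Suc (Suc r) \<le> q" "q \<le> w" shows "pr q (t * g) = 0"
proof -
  have "g \<in> V (Suc r)" using g H_in_V r by blast
  hence "t * g \<in> V (Suc (Suc r))" using mult_Vk[OF t] by blast
  thus ?thesis using proj_low q by blast
qed

lemma band_down: assumes t: "t \<in> V1" and r: "r < w" and g: "g \<in> H r"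
  and q: "Suc (Suc q) \<le> r" shows "pr q (t * g) = 0"
proof -
  have "t * g \<in> qperp (V (r - 1))"
    unfolding qperp_def
  proof (intro CollectI ballI)
    fix h assume h: "h \<in> V (r - 1)"
    have "t * h \<in> V (Suc (r - 1))" using mult_Vk[OF t h] .
    hence "t * h \<in> V r" using q by (simp add: Suc_pred')
    moreover have "g \<in> qperp (V r)" using g H_perp[of r] r by auto
    ultimately have "trq g (t * h) = 0" by (simp add: qperp_def)
    thus "trq (t * g) h = 0" by (simp add: trq_mult)
  qed
  thus ?thesis using proj_perp q r by simp
qed

definition DD where
  "DD z x y t f = (\<Sum>q<w. \<Sum>p<w. cscale (cc z x y q p) (pr q (t * pr p f)))"

end

lemma coef: fixes w :: nat assumes hat: "\<And>p. Suc p < w \<Longrightarrow> x p * y p = z^2"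
  and "q < w" "r < w" "p < w" "r \<le> Suc p" "p \<le> Suc r" "q \<le> Suc r" "r \<le> Suc q"
  shows "cc z x y q r * cc z x y r p = ee z x y q p"
proof -
  have qc: "q = r \<or> q = Suc r \<or> r = Suc q" using assms by linarith
  have pc: "p = r \<or> p = Suc r \<or> r = Suc p" using assms by linarith
  from qc pc show ?thesis
  proof (elim disjE)
    assume "q = Suc r" "p = Suc r"
    thus ?thesis using hat[of r] assms by (simp add: cc_def ee_def mult.commute)
  next
    assume "r = Suc q" "r = Suc p"
    thus ?thesis using hat[of q] assms by (simp add: cc_def ee_def mult.commute)
  qed (use assms in \<open>auto simp: cc_def ee_def power2_eq_square mult.commute\<close>)
qed

context polset begin

lemma proj_DD: assumes r: "r < w"
  shows "pr r (DD z x y t f) = (\<Sum>p<w. cscale (cc z x y r p) (pr r (t * pr p f)))"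
proof -
  have "pr r (DD z x y t f) = (\<Sum>q<w. \<Sum>p<w. cscale (cc z x y q p) (pr r (pr q (t * pr p f))))"
    using r by (simp add: DD_def proj_setsum proj_scale)
  also have "\<dots> = (\<Sum>q<w. if q = r then (\<Sum>p<w. cscale (cc z x y q p) (pr q (t * pr p f))) else 0)"
  proof (rule sum.cong[OF refl])
    fix q assume q: "q \<in> {..<w}"
    show "(\<Sum>p<w. cscale (cc z x y q p) (pr r (pr q (t * pr p f)))) =
      (if q = r then (\<Sum>p<w. cscale (cc z x y q p) (pr q (t * pr p f))) else 0)"
      using q r proj_H[of q r, OF _ _ proj_in] by auto
  qed
  also have "\<dots> = (\<Sum>p<w. cscale (cc z x y r p) (pr r (t * pr p f)))"
    using r by (simp add: sum.delta')
  finally show ?thesis .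
qed

lemma T_zero: assumes t: "t \<in> V1" and t': "t' \<in> V1" and qrp: "q < w" "r < w" "p < w"
  and nb: "\<not> (r \<le> Suc p \<and> p \<le> Suc r \<and> q \<le> Suc r \<and> r \<le> Suc q)"
  shows "pr q (t * pr r (t' * pr p f)) = 0"
proof (cases "r \<le> Suc p \<and> p \<le> Suc r")
  case False
  have "pr r (t' * pr p f) = 0"
  proof (cases "Suc (Suc p) \<le> r")
    case True thus ?thesis using band_up[OF t' qrp(3) proj_in] qrp by simp
  next
    case False
    hence "Suc (Suc r) \<le> p" using \<open>\<not> (r \<le> Suc p \<and> p \<le> Suc r)\<close> by linarith
    thus ?thesis using band_down[OF t' qrp(3) proj_in] qrp by simp
  qed
  thus ?thesis using qrp by (simp add: proj_zero)
next
  case True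
  hence nb2: "\<not> (q \<le> Suc r \<and> r \<le> Suc q)" using nb by blast
  have g: "pr r (t' * pr p f) \<in> H r" using proj_in qrp by simp
  show ?thesis
  proof (cases "Suc (Suc r) \<le> q")
    case True thus ?thesis using band_up[OF t qrp(2) g] qrp by simp
  next
    case False
    hence "Suc (Suc q) \<le> r" using nb2 by linarith
    thus ?thesis using band_down[OF t qrp(2) g] by simp
  qed
qed

lemma sum_proj_lt: assumes "g \<in> V w" shows "(\<Sum>r<w. pr r g) = g"
proof -
  have "{..w} = insert w {..<w}" by auto
  hence "g = pr w g + (\<Sum>r<w. pr r g)" using proj_sum[of g] by simp
  moreover have "pr w g = 0" using proj_low[OF assms] by simp
  ultimately show ?thesis by simp
qed

lemma DD_comp: assumes t: "t \<in> V1" and t': "t' \<in> V1"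
  and hat: "\<And>p. Suc p < w \<Longrightarrow> x p * y p = z^2"
  shows "DD z x y t (DD z x y t' f) =
    (\<Sum>q<w. \<Sum>p<w. cscale (ee z x y q p) (pr q (t * (t' * pr p f))))"
proof -
  define T where "T q r p = pr q (t * pr r (t' * pr p f))" for q r p
  have "DD z x y t (DD z x y t' f) =
      (\<Sum>q<w. \<Sum>r<w. cscale (cc z x y q r) (\<Sum>p<w. cscale (cc z x y r p) (T q r p)))"
    unfolding DD_def[of z x y t]
  proof (intro sum.cong refl)
    fix q r assume q: "q \<in> {..<w}" and r: "r \<in> {..<w}"
    have "pr q (t * pr r (DD z x y t' f)) =
       pr q (\<Sum>p<w. cscale (cc z x y r p) (t * pr r (t' * pr p f)))"
      using r by (simp add: proj_DD sum_distrib_left cscale_mult)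
    also have "\<dots> = (\<Sum>p<w. cscale (cc z x y r p) (T q r p))"
      using q by (simp add: proj_setsum proj_scale T_def)
    finally show "cscale (cc z x y q r) (pr q (t * pr r (DD z x y t' f))) =
        cscale (cc z x y q r) (\<Sum>p<w. cscale (cc z x y r p) (T q r p))" by simp
  qed
  also have "\<dots> = (\<Sum>q<w. \<Sum>r<w. \<Sum>p<w. cscale (cc z x y q r * cc z x y r p) (T q r p))"
    by (simp add: cs.scale_sum_right)
  also have "\<dots> = (\<Sum>q<w. \<Sum>p<w. \<Sum>r<w. cscale (cc z x y q r * cc z x y r p) (T q r p))"
    by (rule sum.cong[OF refl]) (rule sum.swap)
  also have "\<dots> = (\<Sum>q<w. \<Sum>p<w. cscale (ee z x y q p) (\<Sum>r<w. T q r p))"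
  proof (intro sum.cong refl)
    fix q p assume q: "q \<in> {..<w}" and p: "p \<in> {..<w}"
    have "(\<Sum>r<w. cscale (cc z x y q r * cc z x y r p) (T q r p)) = (\<Sum>r<w. cscale (ee z x y q p) (T q r p))"
    proof (rule sum.cong[OF refl])
      fix r assume r: "r \<in> {..<w}"
      show "cscale (cc z x y q r * cc z x y r p) (T q r p) = cscale (ee z x y q p) (T q r p)"
      proof (cases "r \<le> Suc p \<and> p \<le> Suc r \<and> q \<le> Suc r \<and> r \<le> Suc q")
        case True thus ?thesis using coef[of w x y z q r p] hat q p r by simp
      next
        case False thus ?thesis using T_zero[OF t t', of q r p f] q p r by (simp add: T_def)
      qed
    qed
    thus "(\<Sum>r<w. cscale (cc z x y q r * cc z x y r p) (T q r p)) = cscale (ee z x y q p) (\<Sum>r<w. T q r p)"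
      by (simp add: cs.scale_sum_right)
  qed
  also have "\<dots> = (\<Sum>q<w. \<Sum>p<w. cscale (ee z x y q p) (pr q (t * (t' * pr p f))))"
  proof (intro sum.cong refl)
    fix q p assume q: "q \<in> {..<w}" and p: "p \<in> {..<w}"
    have "t' * pr p f \<in> V w" using mult_Vw[OF t'] H_in_Vw[of p] proj_in[of p f] p by auto
    hence "(\<Sum>r<w. T q r p) = pr q (t * (t' * pr p f))"
      using q by (simp add: T_def proj_setsum[symmetric] sum_distrib_left[symmetric] sum_proj_lt)
    thus "cscale (ee z x y q p) (\<Sum>r<w. T q r p) = cscale (ee z x y q p) (pr q (t * (t' * pr p f)))"
      by simp
  qed
  finally show ?thesis .
qed

end

lemma sum_trunc: "(\<Sum>p<(w::nat). if Suc p < w then F p else 0) = (\<Sum>p<w - 1. F p)"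
proof (cases w)
  case (Suc m)
  have "(\<Sum>p<Suc m. if Suc p < Suc m then F p else 0) = (\<Sum>p<m. if Suc p < Suc m then F p else 0)"
    by simp
  also have "\<dots> = (\<Sum>p<m. F p)" by (rule sum.cong) auto
  finally show ?thesis using Suc by simp
qed simp

context polset begin

lemma Dzxy_eq: "Dzxy V1 z x y t f = DD z x y t f"
proof -
  define P where "P q p = pr q (t * pr p f)" for q p
  have split: "cscale (cc z x y q p) (P q p) =
     (if q = p then cscale z (P q p) else 0) + (if q = Suc p then cscale (x p) (P q p) else 0)
     + (if p = Suc q then cscale (y q) (P q p) else 0)" for q p
    by (simp add: cc_def)
  have "DD z x y t f = (\<Sum>q<w. \<Sum>p<w. (if q = p then cscale z (P q p) else 0))
     + (\<Sum>q<w. \<Sum>p<w. (if q = Suc p then cscale (x p) (P q p) else 0))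
     + (\<Sum>q<w. \<Sum>p<w. (if p = Suc q then cscale (y q) (P q p) else 0))"
    unfolding DD_def P_def[symmetric] split by (simp add: sum.distrib)
  also have "(\<Sum>q<w. \<Sum>p<w. (if q = p then cscale z (P q p) else 0)) = cscale z (D0 V1 t f)"
    by (simp add: D0_def P_def cs.scale_sum_right)
  also have "(\<Sum>q<w. \<Sum>p<w. (if q = Suc p then cscale (x p) (P q p) else 0))
      = (\<Sum>p<w. \<Sum>q<w. (if q = Suc p then cscale (x p) (P q p) else 0))"
    by (rule sum.swap)
  also have "\<dots> = (\<Sum>p<w. if Suc p < w then cscale (x p) (P (Suc p) p) else 0)"
    by (simp add: sum.delta)
  also have "\<dots> = (\<Sum>p<w - 1. cscale (x p) (Dplus V1 p t f))"
    by (simp add: sum_trunc Dplus_def P_def)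
  also have "(\<Sum>q<w. \<Sum>p<w. (if p = Suc q then cscale (y q) (P q p) else 0))
      = (\<Sum>q<w. if Suc q < w then cscale (y q) (P q (Suc q)) else 0)"
    by (simp add: sum.delta)
  also have "\<dots> = (\<Sum>p<w - 1. cscale (y p) (Dminus V1 (Suc p) t f))"
    by (simp add: sum_trunc Dminus_def P_def)
  finally have "DD z x y t f = cscale z (D0 V1 t f) + (\<Sum>p<w - 1. cscale (x p) (Dplus V1 p t f))
     + (\<Sum>p<w - 1. cscale (y p) (Dminus V1 (Suc p) t f))" .
  thus ?thesis unfolding Dzxy_def by (rule sym)
qed

end

theorem mainTheorem9:
  fixes V1 :: "('z::finite \<Rightarrow> complex) set"
    and z :: complex and x y :: "nat \<Rightarrow> complex"
  assumes subsp: "module.subspace cscale V1"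
    and one: "1 \<in> V1"
    and pol: "polarizing V1"
    and w2: "wdeg V1 \<ge> 2"
    and hat: "\<forall>p < wdeg V1 - 1. x p * y p = z ^ 2"
  shows "\<forall>t\<in>Hp V1 0. \<forall>t'\<in>Hp V1 0. \<forall>f\<in>Vk V1 (wdeg V1).
           Dzxy V1 z x y t (Dzxy V1 z x y t' f) = Dzxy V1 z x y t' (Dzxy V1 z x y t f)"
proof (intro ballI)
  interpret polset V1 using subsp one pol by unfold_locales
  fix t t' f assume t: "t \<in> Hp V1 0" and t': "t' \<in> Hp V1 0"
  have tV: "t \<in> V1" "t' \<in> V1" using t t' H0_eq by auto
  have hat': "\<And>p. Suc p < wdeg V1 \<Longrightarrow> x p * y p = z^2" using hat by auto
  have "Dzxy V1 z x y t (Dzxy V1 z x y t' f) = DD z x y t (DD z x y t' f)" by (simp add: Dzxy_eq)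
  also have "\<dots> = (\<Sum>q<wdeg V1. \<Sum>p<wdeg V1. cscale (ee z x y q p) (proj V1 q (t * (t' * proj V1 p f))))"
    by (rule DD_comp[OF tV hat'])
  also have "\<dots> = (\<Sum>q<wdeg V1. \<Sum>p<wdeg V1. cscale (ee z x y q p) (proj V1 q (t' * (t * proj V1 p f))))"
    by (simp add: mult.left_commute)
  also have "\<dots> = DD z x y t' (DD z x y t f)"
    by (rule DD_comp[OF tV(2) tV(1) hat', symmetric])
  also have "\<dots> = Dzxy V1 z x y t' (Dzxy V1 z x y t f)" by (simp add: Dzxy_eq)
  finally show "Dzxy V1 z x y t (Dzxy V1 z x y t' f) = Dzxy V1 z x y t' (Dzxy V1 z x y t f)" .
qed

end
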